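(* Let $\lambda>0$, $\gamma\ge0$ and $\omega\in[-\pi,\pi]$, and put $\delta=(\sqrt{\gamma^2+1}-1)/\gamma$ (with $\delta=0$ if $\gamma=0$). The Kullback–Leibler divergence $$KL(\mathrm{GCPC}\,\|\,\mathrm{CIPC})=\int_{-\pi}^{\pi}f_{GCPC}(\theta)\log\frac{f_{GCPC}(\theta)}{f_{CIPC}(\theta)}\,d\theta$$ between $\mathrm{GCPC}(\omega,\gamma,\lambda)$ and $\mathrm{CIPC}(\omega,\gamma)$ equals $$-\frac12\log\lambda+2\log\!\left(\frac{\sqrt{\lambda}(1-\delta^2)+1+\delta^2}{2}\right)-\log(1-\delta^2)+E_{WC}\!\left[\log\!\left(\sqrt{\gamma^2+1}-\frac{\gamma\cos\psi}{\sqrt{1+(\lambda-1)\sin^2\psi}}\right)\right],$$ where the expectation is over $\psi\sim\mathrm{WC}(0,\delta)$.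
   Context: For $\lambda>0$, $\gamma\ge0$ and $\omega\in[-\pi,\pi]$, the distribution $\mathrm{GCPC}(\omega,\gamma,\lambda)$ is the distribution on the circle with density $$f_{GCPC}(\theta)=\frac{1}{2\pi\sqrt{\lambda}\,\bigl(b\sqrt{\gamma^2+1}-\gamma\cos\phi\,\sqrt{b}\bigr)},\qquad \phi=\theta-\omega,\quad b=\cos^2\phi+\frac{\sin^2\phi}{\lambda}.$$ The distribution $\mathrm{CIPC}(\omega,\gamma)$ has density $f_{CIPC}(\theta)=\dfrac{1}{2\pi(\sqrt{\gamma^2+1}-\gamma\cos(\theta-\omega))}$. For $0\le\delta<1$, the distribution $\mathrm{WC}(0,\delta)$ has density $\dfrac{1-\delta^2}{2\pi(1+\delta^2-2\delta\cos\psi)}$ on $(-\pi,\pi]$. *)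

theory Defs
  imports "HOL-Analysis.Analysis"
begin

definition f_GCPC :: "real \<Rightarrow> real \<Rightarrow> real \<Rightarrow> real \<Rightarrow> real" where
  "f_GCPC \<omega> \<gamma> lam \<theta> =
     (let \<phi> = \<theta> - \<omega>; b = (cos \<phi>)\<^sup>2 + (sin \<phi>)\<^sup>2 / lam
      in 1 / (2 * pi * sqrt lam * (b * sqrt (\<gamma>\<^sup>2 + 1) - \<gamma> * cos \<phi> * sqrt b)))"

definition f_CIPC :: "real \<Rightarrow> real \<Rightarrow> real \<Rightarrow> real" where
  "f_CIPC \<omega> \<gamma> \<theta> = 1 / (2 * pi * (sqrt (\<gamma>\<^sup>2 + 1) - \<gamma> * cos (\<theta> - \<omega>)))"

definition f_WC :: "real \<Rightarrow> real \<Rightarrow> real" where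
  "f_WC \<delta> \<psi> = (1 - \<delta>\<^sup>2) / (2 * pi * (1 + \<delta>\<^sup>2 - 2 * \<delta> * cos \<psi>))"

definition delta_of :: "real \<Rightarrow> real" where
  "delta_of \<gamma> = (if \<gamma> = 0 then 0 else (sqrt (\<gamma>\<^sup>2 + 1) - 1) / \<gamma>)"

end

theory Submission
  imports Defs "HOL-Complex_Analysis.Complex_Analysis"
begin


lemma kernel_identity:
  fixes d t :: real
  assumes "0 \<le> d" "d < 1"
  shows "cis t / (cis t - of_real d) + of_real d * cis t / (1 - of_real d * cis t)
         = of_real ((1 - d\<^sup>2) / (1 + d\<^sup>2 - 2 * d * cos t))"
proof -
  have cs: "(cos t)\<^sup>2 + (sin t)\<^sup>2 = 1" by simp
  have pos: "1 + d\<^sup>2 - 2 * d * cos t > 0"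
  proof -
    have "d * cos t \<le> d" using assms by (simp add: mult_left_le)
    hence "1 + d\<^sup>2 - 2 * d * cos t \<ge> (1 - d)\<^sup>2" by (simp add: power2_eq_square algebra_simps)
    moreover have "(1 - d)\<^sup>2 > 0" using assms by simp
    ultimately show ?thesis by linarith
  qed
  have n1: "cis t - of_real d \<noteq> 0"
  proof
    assume "cis t - of_real d = 0"
    hence "cmod (cis t) = cmod (of_real d :: complex)" by simp
    thus False using assms by simp
  qed
  have n2: "1 - of_real d * cis t \<noteq> 0"
  proof
    assume "1 - of_real d * cis t = 0"
    hence "cmod (1::complex) = cmod (of_real d * cis t)" by simp
    thus False using assms by (simp add: norm_mult)
  qed
  have prod: "(cis t - of_real d) * (1 - of_real d * cis t) = cis t * of_real (1 + d\<^sup>2 - 2 * d * cos t)"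
    by (simp add: complex_eq_iff cis.sel algebra_simps power2_eq_square cos_double sin_double)
       (metis cs distrib_left mult.right_neutral power2_eq_square)
  have w0: "cis t \<noteq> 0" by simp
  have "cis t / (cis t - of_real d) + of_real d * cis t / (1 - of_real d * cis t)
      = (cis t * (1 - of_real d * cis t) + of_real d * cis t * (cis t - of_real d)) /
        ((cis t - of_real d) * (1 - of_real d * cis t))"
    using n1 n2 by (simp add: field_simps)
  also have "\<dots> = (cis t * of_real (1 - d\<^sup>2)) / (cis t * of_real (1 + d\<^sup>2 - 2 * d * cos t))"
    by (subst prod) (simp add: algebra_simps power2_eq_square)
  also have "\<dots> = of_real (1 - d\<^sup>2) / of_real (1 + d\<^sup>2 - 2 * d * cos t)"
    using w0 by simp
  finally show ?thesis by simp
qed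

lemma poisson_complex:
  fixes F :: "complex \<Rightarrow> complex" and R d :: real
  assumes holF: "F holomorphic_on ball 0 R" and R: "R > 1" and d: "0 \<le> d" "d < 1"
  shows "((\<lambda>t. of_real (f_WC d t) * F (cis t)) has_integral F (of_real d)) {0..2*pi}"
proof -
  define R' where "R' = min R (2/(1+d))"
  have R'1: "R' > 1" using R d by (auto simp: R'_def field_simps)
  have dR': "d * R' < 1"
  proof -
    have "R' \<le> 2/(1+d)" by (simp add: R'_def)
    hence "d * R' \<le> d * (2/(1+d))" using d by (intro mult_left_mono) auto
    also have "\<dots> < 1" using d by (simp add: field_simps)
    finally show ?thesis .
  qed
  have hol': "F holomorphic_on ball 0 R'"
    using holF by (rule holomorphic_on_subset) (auto simp: R'_def)
  have c1: "((\<lambda>u. F u / (u - of_real d)) has_contour_integral (2 * of_real pi * \<i> * F (of_real d))) (circlepath 0 1)"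
    apply (rule Cauchy_integral_circlepath_simple)
    using hol' apply (rule holomorphic_on_subset)
    using R'1 d by auto
  have nz: "1 - of_real d * u \<noteq> 0" if "u \<in> ball 0 R'" for u :: complex
  proof
    assume "1 - of_real d * u = 0"
    hence "cmod (1::complex) = cmod (of_real d * u)" by simp
    also have "\<dots> = d * cmod u" using d by (simp add: norm_mult)
    also have "\<dots> \<le> d * R'" using that d by (auto intro!: mult_left_mono simp: dist_norm)
    finally show False using dR' by simp
  qed
  have c2: "((\<lambda>u. F u * (of_real d / (1 - of_real d * u))) has_contour_integral 0) (circlepath 0 1)"
    apply (rule Cauchy_theorem_disc_simple[of _ 0 R'])
    using hol' nz R'1 by (auto intro!: holomorphic_intros)
  have c: "((\<lambda>u. F u / (u - of_real d) + F u * (of_real d / (1 - of_real d * u)))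
           has_contour_integral (2 * of_real pi * \<i> * F (of_real d))) (circlepath 0 1)"
    using has_contour_integral_add[OF c1 c2] by simp
  hence i1: "((\<lambda>t. (F (cis t) / (cis t - of_real d) + F (cis t) * (of_real d / (1 - of_real d * cis t))) * 1 * \<i> * cis t)
          has_integral (2 * of_real pi * \<i> * F (of_real d))) {0..2*pi}"
    unfolding circlepath_def
    by (subst (asm) has_contour_integral_part_circlepath_iff) auto
  have i2: "((\<lambda>t. (1 / (2 * of_real pi * \<i>)) * ((F (cis t) / (cis t - of_real d) + F (cis t) * (of_real d / (1 - of_real d * cis t))) * 1 * \<i> * cis t))
          has_integral (1 / (2 * of_real pi * \<i>)) * (2 * of_real pi * \<i> * F (of_real d))) {0..2*pi}"
    by (rule has_integral_mult_right[OF i1])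
  have eq: "(1 / (2 * of_real pi * \<i>)) * ((F (cis t) / (cis t - of_real d) + F (cis t) * (of_real d / (1 - of_real d * cis t))) * 1 * \<i> * cis t)
     = of_real (f_WC d t) * F (cis t)" for t
  proof -
    have k: "cis t / (cis t - of_real d) + of_real d * cis t / (1 - of_real d * cis t)
         = of_real ((1 - d\<^sup>2) / (1 + d\<^sup>2 - 2 * d * cos t))"
      by (rule kernel_identity[OF d])
    have "(1 / (2 * of_real pi * \<i>)) * ((F (cis t) / (cis t - of_real d) + F (cis t) * (of_real d / (1 - of_real d * cis t))) * 1 * \<i> * cis t)
        = (1 / (2 * of_real pi)) * F (cis t) * (cis t / (cis t - of_real d) + of_real d * cis t / (1 - of_real d * cis t))"
      by (simp add: algebra_simps)
    also have "\<dots> = of_real (f_WC d t) * F (cis t)"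
      unfolding k f_WC_def by simp
    finally show ?thesis .
  qed
  have "((\<lambda>t. of_real (f_WC d t) * F (cis t)) has_integral (1 / (2 * of_real pi * \<i>)) * (2 * of_real pi * \<i> * F (of_real d))) {0..2*pi}"
    by (rule has_integral_eq[OF _ i2]) (rule eq)
  thus ?thesis by simp
qed

lemma cis_per: "cis (x + 2 * pi) = cis x"
  by (simp flip: cis_mult)

lemma periodic_shift:
  fixes f :: "real \<Rightarrow> real"
  assumes cont: "continuous_on UNIV f" and per: "\<And>x. f (x + 2*pi) = f x"
    and a: "-2*pi \<le> a" "a \<le> 0"
  shows "(f has_integral integral {0..2*pi} f) {a..a+2*pi}"
proof -
  have ci: "\<And>u v. f integrable_on {u..v}"
    by (rule integrable_continuous_real) (rule continuous_on_subset[OF cont], simp)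
  have s1: "((\<lambda>x. 1 *\<^sub>R f (x + 2*pi)) has_integral integral {a + 2*pi .. 0 + 2*pi} f) {a..0}"
    apply (rule has_integral_substitution[where c="a+2*pi" and d="2*pi"])
    using a apply (auto intro!: derivative_eq_intros continuous_on_subset[OF cont])
    done
  hence s1': "(f has_integral integral {a + 2*pi .. 2*pi} f) {a..0}"
    by (simp add: per)
  have s2: "(f has_integral integral {0..a+2*pi} f) {0..a+2*pi}"
    using ci by (simp add: integrable_integral)
  have comb: "integral {a + 2*pi .. 2*pi} f + integral {0..a+2*pi} f = integral {0..2*pi} f"
    using Henstock_Kurzweil_Integration.integral_combine[where a=0 and c="a+2*pi" and b="2*pi" and f=f] ci a by simp
  show ?thesis
    using has_integral_combine[OF _ _ s1' s2] a comb by simp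
qed

lemma cont_f_WC: assumes "0 \<le> d" "d < 1" shows "continuous_on UNIV (f_WC d)"
proof -
  have "1 + d\<^sup>2 - 2 * d * cos t > 0" for t
  proof -
    have "d * cos t \<le> d" using assms by (simp add: mult_left_le)
    hence "1 + d\<^sup>2 - 2 * d * cos t \<ge> (1 - d)\<^sup>2" by (simp add: power2_eq_square algebra_simps)
    moreover have "(1 - d)\<^sup>2 > 0" using assms by simp
    ultimately show ?thesis by linarith
  qed
  hence "2 * pi * (1 + d\<^sup>2 - 2 * d * cos t) \<noteq> 0" for t by (metis less_irrefl mult_eq_0_iff pi_neq_zero zero_neq_numeral)
  thus ?thesis unfolding f_WC_def
    by (intro continuous_intros) auto
qed

lemma poisson_real:
  fixes F :: "complex \<Rightarrow> complex" and R d :: real and g :: "real \<Rightarrow> real"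
  assumes holF: "F holomorphic_on ball 0 R" and R: "R > 1" and d: "0 \<le> d" "d < 1"
    and g: "\<And>t. g t = Re (F (cis t))"
  shows "((\<lambda>t. f_WC d t * g t) has_integral Re (F (of_real d))) {-pi..pi}"
proof -
  have c: "((\<lambda>t. of_real (f_WC d t) * F (cis t)) has_integral F (of_real d)) {0..2*pi}"
    by (rule poisson_complex[OF holF R d])
  have "((Re \<circ> (\<lambda>t. of_real (f_WC d t) * F (cis t))) has_integral Re (F (of_real d))) {0..2*pi}"
    by (rule has_integral_linear[OF c bounded_linear_Re])
  hence r: "((\<lambda>t. f_WC d t * g t) has_integral Re (F (of_real d))) {0..2*pi}"
    by (simp add: o_def g)
  have contg: "continuous_on UNIV g"
  proof -
    have "continuous_on UNIV (\<lambda>t. Re (F (cis t)))"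
      apply (rule continuous_on_compose2[where t="ball 0 R" and g="\<lambda>z. Re (F z)"])
        apply (intro continuous_intros holomorphic_on_imp_continuous_on[OF holF])
       apply (intro continuous_intros)
      using R by auto
    thus ?thesis by (simp add: g[abs_def])
  qed
  have "((\<lambda>t. f_WC d t * g t) has_integral integral {0..2*pi} (\<lambda>t. f_WC d t * g t)) {-pi..-pi+2*pi}"
  proof (rule periodic_shift)
    show "continuous_on UNIV (\<lambda>t. f_WC d t * g t)"
      using cont_f_WC[OF d] contg by (intro continuous_intros)
    show "f_WC d (x + 2 * pi) * g (x + 2 * pi) = f_WC d x * g x" for x
      by (simp add: g f_WC_def cis_per)
  qed auto
  moreover have "integral {0..2*pi} (\<lambda>t. f_WC d t * g t) = Re (F (of_real d))"
    using r by (rule integral_unique)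
  ultimately show ?thesis by simp
qed

lemma Re_pos_notin_nonpos: "Re z > 0 \<Longrightarrow> z \<notin> \<real>\<^sub>\<le>\<^sub>0"
  by (simp add: complex_nonpos_Reals_iff)

lemma cmod_one_plus_cis_sq:
  fixes c u :: real
  shows "(cmod (1 + of_real c * cis u))\<^sup>2 = 1 + 2 * c * cos u + c\<^sup>2"
proof -
  have "(cmod (1 + of_real c * cis u))\<^sup>2 = (1 + c * cos u)\<^sup>2 + (c * sin u)\<^sup>2"
    by (simp add: cmod_power2)
  also have "\<dots> = 1 + 2 * c * cos u + c\<^sup>2"
  proof -
    have cs: "cos u * cos u + sin u * sin u = 1" by (simp flip: power2_eq_square)
    show ?thesis by (simp add: power2_eq_square algebra_simps) (metis cs distrib_left mult.assoc mult.right_neutral)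
  qed
  finally show ?thesis .
qed

lemma delta_facts:
  fixes \<gamma> :: real
  assumes "\<gamma> \<ge> 0"
  defines "\<delta> \<equiv> delta_of \<gamma>"
  shows "0 \<le> \<delta>" "\<delta> < 1" "sqrt (\<gamma>\<^sup>2 + 1) * (1 - \<delta>\<^sup>2) = 1 + \<delta>\<^sup>2"
        "\<gamma> * (1 - \<delta>\<^sup>2) = 2 * \<delta>"
proof -
  define S where "S = sqrt (\<gamma>\<^sup>2 + 1)"
  have S2: "S\<^sup>2 = \<gamma>\<^sup>2 + 1" unfolding S_def by simp
  have S1: "S \<ge> 1" unfolding S_def by simp
  have all: "0 \<le> \<delta> \<and> \<delta> < 1 \<and> S * (1 - \<delta>\<^sup>2) = 1 + \<delta>\<^sup>2 \<and> \<gamma> * (1 - \<delta>\<^sup>2) = 2 * \<delta>"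
  proof (cases "\<gamma> = 0")
    case True
    then show ?thesis by (simp add: \<delta>_def delta_of_def S_def)
  next
    case False
    hence g: "\<gamma> > 0" using assms by simp
    have d: "\<delta> = (S - 1) / \<gamma>" using False by (simp add: \<delta>_def delta_of_def S_def)
    have Slt: "S < \<gamma> + 1"
    proof -
      have "S\<^sup>2 < (\<gamma> + 1)\<^sup>2" using S2 g by (simp add: power2_eq_square algebra_simps)
      thus ?thesis using g S1 by (smt (verit) power_mono)
    qed
    have "0 \<le> \<delta>" using d S1 g by simp
    moreover have "\<delta> < 1"
    proof -
      have "\<delta> * \<gamma> = S - 1" using d g by simp
      hence "\<delta> * \<gamma> < 1 * \<gamma>" using Slt by simp
      thus ?thesis using g by (meson mult_right_less_imp_less less_imp_le)
    qed
    moreover have "S * (1 - \<delta>\<^sup>2) = 1 + \<delta>\<^sup>2"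
      unfolding d using g S2 by (simp add: field_simps power2_eq_square)
    moreover have "\<gamma> * (1 - \<delta>\<^sup>2) = 2 * \<delta>"
      unfolding d using g S2 by (simp add: field_simps power2_eq_square)
    ultimately show ?thesis by blast
  qed
  thus "0 \<le> \<delta>" "\<delta> < 1" "sqrt (\<gamma>\<^sup>2 + 1) * (1 - \<delta>\<^sup>2) = 1 + \<delta>\<^sup>2"
        "\<gamma> * (1 - \<delta>\<^sup>2) = 2 * \<delta>" by (auto simp: S_def)
qed




lemma WC_den_pos:
  fixes d t :: real assumes "0 \<le> d" "d < 1"
  shows "1 + d\<^sup>2 - 2 * d * cos t > 0"
proof -
  have "d * cos t \<le> d" using assms by (simp add: mult_left_le)
  hence "1 + d\<^sup>2 - 2 * d * cos t \<ge> (1 - d)\<^sup>2" by (simp add: power2_eq_square algebra_simps)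
  moreover have "(1 - d)\<^sup>2 > 0" using assms by simp
  ultimately show ?thesis by linarith
qed

lemma E0:
  fixes d :: real assumes "0 \<le> d" "d < 1"
  shows "(f_WC d has_integral 1) {-pi..pi}"
proof -
  have "((\<lambda>t. f_WC d t * 1) has_integral Re ((\<lambda>w::complex. 1) (of_real d))) {-pi..pi}"
    by (rule poisson_real[where R=2]) (use assms in auto)
  thus ?thesis by simp
qed

lemma EA:
  fixes \<gamma> :: real assumes g0: "\<gamma> \<ge> 0"
  defines "\<delta> \<equiv> delta_of \<gamma>"
  shows "((\<lambda>t. f_WC \<delta> t * ln (sqrt (\<gamma>\<^sup>2 + 1) - \<gamma> * cos t)) has_integral ln (1 - \<delta>\<^sup>2)) {-pi..pi}"
proof -
  note df = delta_facts[OF g0, folded \<delta>_def]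
  define F where "F = (\<lambda>w::complex. 2 * Ln (1 - of_real \<delta> * w) - of_real (ln (1 - \<delta>\<^sup>2)))"
  define R where "R = 2 / (1 + \<delta>)"
  have R1: "R > 1" using df by (simp add: R_def field_simps)
  have dR: "\<delta> * R < 1" using df by (simp add: R_def field_simps)
  have d2: "1 - \<delta>\<^sup>2 > 0" using power_strict_mono[of \<delta> 1 2] df(1,2) by simp
  have re: "Re (1 - of_real \<delta> * w) > 0" if "cmod w < R" for w
  proof -
    have "Re (of_real \<delta> * w) \<le> cmod (of_real \<delta> * w)" by (rule complex_Re_le_cmod)
    also have "\<dots> = \<delta> * cmod w" using df by (simp add: norm_mult)
    also have "\<dots> \<le> \<delta> * R" using that df by (intro mult_left_mono) auto
    finally show ?thesis using dR by simp
  qed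
  have hol: "F holomorphic_on ball 0 R" unfolding F_def
    by (intro holomorphic_intros Re_pos_notin_nonpos re) simp
  have g: "ln (sqrt (\<gamma>\<^sup>2 + 1) - \<gamma> * cos t) = Re (F (cis t))" for t
  proof -
    have "Re (1 - of_real \<delta> * cis t) > 0" using re[of "cis t"] R1 by simp
    hence nz: "1 - of_real \<delta> * cis t \<noteq> 0" by (metis less_irrefl zero_complex.simps(1))
    have den: "1 + \<delta>\<^sup>2 - 2 * \<delta> * cos t > 0" by (rule WC_den_pos[OF df(1,2)])
    have "Re (F (cis t)) = 2 * Re (Ln (1 - of_real \<delta> * cis t)) - ln (1 - \<delta>\<^sup>2)"
      by (simp add: F_def)
    also have "Re (Ln (1 - of_real \<delta> * cis t)) = ln (cmod (1 - of_real \<delta> * cis t))"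
      by (rule Re_Ln[OF nz])
    also have "2 * ln (cmod (1 - of_real \<delta> * cis t)) = ln ((cmod (1 - of_real \<delta> * cis t))\<^sup>2)"
      by (simp add: ln_realpow)
    also have "(cmod (1 - of_real \<delta> * cis t))\<^sup>2 = 1 + \<delta>\<^sup>2 - 2 * \<delta> * cos t"
      using cmod_one_plus_cis_sq[of "-\<delta>" t] by simp
    also have "ln (1 + \<delta>\<^sup>2 - 2 * \<delta> * cos t) - ln (1 - \<delta>\<^sup>2) = ln ((1 + \<delta>\<^sup>2 - 2 * \<delta> * cos t) / (1 - \<delta>\<^sup>2))"
      using den d2 by (simp add: ln_div)
    also have "(1 + \<delta>\<^sup>2 - 2 * \<delta> * cos t) / (1 - \<delta>\<^sup>2) = sqrt (\<gamma>\<^sup>2 + 1) - \<gamma> * cos t"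
    proof -
      have "(sqrt (\<gamma>\<^sup>2 + 1) - \<gamma> * cos t) * (1 - \<delta>\<^sup>2) = sqrt (\<gamma>\<^sup>2 + 1) * (1 - \<delta>\<^sup>2) - (\<gamma> * (1 - \<delta>\<^sup>2)) * cos t"
        by (simp add: algebra_simps)
      also have "\<dots> = 1 + \<delta>\<^sup>2 - 2 * \<delta> * cos t" using df(3,4) by simp
      finally show ?thesis using d2 by (simp add: field_simps)
    qed
    finally show ?thesis by simp
  qed
  have "((\<lambda>t. f_WC \<delta> t * ln (sqrt (\<gamma>\<^sup>2 + 1) - \<gamma> * cos t)) has_integral Re (F (of_real \<delta>))) {-pi..pi}"
    by (rule poisson_real[OF hol R1 df(1) df(2)]) (rule g)
  moreover have "Re (F (of_real \<delta>)) = ln (1 - \<delta>\<^sup>2)"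
  proof -
    have hq: "1 - of_real \<delta> * of_real \<delta> = (of_real (1 - \<delta>\<^sup>2) :: complex)" by (simp add: power2_eq_square)
    have "F (of_real \<delta>) = 2 * Ln (of_real (1 - \<delta>\<^sup>2)) - of_real (ln (1 - \<delta>\<^sup>2))"
      by (simp only: F_def hq)
    also have "\<dots> = 2 * of_real (ln (1 - \<delta>\<^sup>2)) - of_real (ln (1 - \<delta>\<^sup>2))"
      using Ln_of_real[OF d2] by simp
    finally have "F (of_real \<delta>) = 2 * of_real (ln (1 - \<delta>\<^sup>2)) - of_real (ln (1 - \<delta>\<^sup>2))" .
    thus ?thesis by simp
  qed
  ultimately show ?thesis by simp
qed




lemma EB:
  fixes lam d :: real assumes lam: "lam > 0" and d: "0 \<le> d" "d < 1"
  shows "((\<lambda>t. f_WC d t * ln (1 + (lam - 1) * (sin t)\<^sup>2)) has_integral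
          2 * ln ((sqrt lam * (1 - d\<^sup>2) + 1 + d\<^sup>2) / 2)) {-pi..pi}"
proof -
  define s where "s = sqrt lam"
  have s0: "s > 0" using lam by (simp add: s_def)
  have lam_s: "lam = s\<^sup>2" using lam by (simp add: s_def)
  define r where "r = (1 - s) / (1 + s)"
  have r1: "\<bar>r\<bar> < 1" using s0 by (simp add: r_def abs_less_iff field_simps)
  have rs: "(1 + s) * r = 1 - s" using s0 by (simp add: r_def field_simps)
  define F where "F = (\<lambda>w::complex. 2 * of_real (ln ((1 + s) / 2)) + 2 * Ln (1 + of_real r * w\<^sup>2))"
  define R where "R = 2 / (1 + \<bar>r\<bar>)"
  have R1: "R > 1" using r1 by (simp add: R_def field_simps)
  have rR: "\<bar>r\<bar> * R\<^sup>2 < 1"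
  proof -
    have "(1 - \<bar>r\<bar>)\<^sup>2 > 0" using r1 by simp
    hence "4 * \<bar>r\<bar> < (1 + \<bar>r\<bar>)\<^sup>2" by (simp add: power2_eq_square algebra_simps)
    thus ?thesis unfolding R_def by (simp add: field_simps power2_eq_square)
  qed
  have re: "Re (1 + of_real r * w\<^sup>2) > 0" if "cmod w < R" for w
  proof -
    have "- Re (of_real r * w\<^sup>2) \<le> cmod (of_real r * w\<^sup>2)"
      using abs_Re_le_cmod[of "of_real r * w\<^sup>2"] by linarith
    also have "\<dots> = \<bar>r\<bar> * (cmod w)\<^sup>2" by (simp add: norm_mult norm_power)
    also have "\<dots> \<le> \<bar>r\<bar> * R\<^sup>2"
      using that by (intro mult_left_mono power_mono) auto
    finally show ?thesis using rR by simp
  qed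
  have hol: "F holomorphic_on ball 0 R" unfolding F_def
    by (intro holomorphic_intros Re_pos_notin_nonpos re) simp
  have g: "ln (1 + (lam - 1) * (sin t)\<^sup>2) = Re (F (cis t))" for t
  proof -
    have "Re (1 + of_real r * (cis t)\<^sup>2) > 0" using re[of "cis t"] R1 by simp
    hence nz: "1 + of_real r * (cis t)\<^sup>2 \<noteq> 0" by (metis less_irrefl zero_complex.simps(1))
    have c2: "(cis t)\<^sup>2 = cis (2 * t)" by (simp add: power2_eq_square cis_mult)
    have sq: "(cmod (1 + of_real r * (cis t)\<^sup>2))\<^sup>2 = 1 + 2 * r * cos (2 * t) + r\<^sup>2"
      unfolding c2 by (rule cmod_one_plus_cis_sq)
    have pos: "1 + 2 * r * cos (2 * t) + r\<^sup>2 > 0" using nz sq by (metis zero_less_power2 norm_eq_zero)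
    have hp: "(1 + s) / 2 > 0" using s0 by simp
    have "Re (F (cis t)) = 2 * ln ((1 + s) / 2) + 2 * Re (Ln (1 + of_real r * (cis t)\<^sup>2))"
      by (simp add: F_def)
    also have "Re (Ln (1 + of_real r * (cis t)\<^sup>2)) = ln (cmod (1 + of_real r * (cis t)\<^sup>2))"
      by (rule Re_Ln[OF nz])
    also have "2 * ln ((1 + s) / 2) + 2 * ln (cmod (1 + of_real r * (cis t)\<^sup>2))
        = ln (((1 + s) / 2)\<^sup>2) + ln ((cmod (1 + of_real r * (cis t)\<^sup>2))\<^sup>2)"
      by (simp add: ln_realpow)
    also have "\<dots> = ln (((1 + s) / 2)\<^sup>2 * (1 + 2 * r * cos (2 * t) + r\<^sup>2))"
      unfolding sq using pos hp by (simp add: ln_mult)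
    also have "((1 + s) / 2)\<^sup>2 * (1 + 2 * r * cos (2 * t) + r\<^sup>2) = 1 + (lam - 1) * (sin t)\<^sup>2"
    proof -
      have "((1 + s) / 2)\<^sup>2 * (1 + 2 * r * cos (2 * t) + r\<^sup>2)
          = (((1 + s) + (1 + s) * r)\<^sup>2 - 4 * (1 + s) * ((1 + s) * r) * (sin t)\<^sup>2) / 4"
        unfolding cos_double_sin by (simp add: power2_eq_square field_simps)
      also have "\<dots> = 1 + (lam - 1) * (sin t)\<^sup>2"
        unfolding rs lam_s by (simp add: power2_eq_square field_simps)
      finally show ?thesis .
    qed
    finally show ?thesis by simp
  qed
  have "((\<lambda>t. f_WC d t * ln (1 + (lam - 1) * (sin t)\<^sup>2)) has_integral Re (F (of_real d))) {-pi..pi}"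
    by (rule poisson_real[OF hol R1 d]) (rule g)
  moreover have "Re (F (of_real d)) = 2 * ln ((sqrt lam * (1 - d\<^sup>2) + 1 + d\<^sup>2) / 2)"
  proof -
    have d2: "d\<^sup>2 \<le> 1" using power_strict_mono[of d 1 2] d by simp
    have "\<bar>r * d\<^sup>2\<bar> < 1"
    proof -
      have "\<bar>r * d\<^sup>2\<bar> = \<bar>r\<bar> * d\<^sup>2" by (simp add: abs_mult)
      also have "\<dots> \<le> \<bar>r\<bar>" using d2 by (simp add: mult_left_le)
      finally show ?thesis using r1 by simp
    qed
    hence p: "1 + r * d\<^sup>2 > 0" by linarith
    have hq: "1 + of_real r * (of_real d)\<^sup>2 = (of_real (1 + r * d\<^sup>2) :: complex)" by simp
    have "F (of_real d) = 2 * of_real (ln ((1 + s) / 2)) + 2 * Ln (of_real (1 + r * d\<^sup>2))"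
      by (simp only: F_def hq)
    also have "\<dots> = 2 * of_real (ln ((1 + s) / 2)) + 2 * of_real (ln (1 + r * d\<^sup>2))"
      using Ln_of_real[OF p] by simp
    finally have "Re (F (of_real d)) = 2 * ln ((1 + s) / 2) + 2 * ln (1 + r * d\<^sup>2)" by simp
    also have "\<dots> = 2 * ln ((1 + s) / 2 * (1 + r * d\<^sup>2))"
      using ln_mult[of "(1 + s) / 2" "1 + r * d\<^sup>2"] p s0 by simp
    also have "(1 + s) / 2 * (1 + r * d\<^sup>2) = (s * (1 - d\<^sup>2) + 1 + d\<^sup>2) / 2"
    proof -
      have "(1 + s) * (1 + r * d\<^sup>2) = (1 + s) + ((1 + s) * r) * d\<^sup>2" by (simp add: algebra_simps)
      also have "\<dots> = s * (1 - d\<^sup>2) + 1 + d\<^sup>2" unfolding rs by (simp add: algebra_simps)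
      finally show ?thesis by simp
    qed
    finally show ?thesis by (simp add: s_def)
  qed
  ultimately show ?thesis by simp
qed




lemma alg1:
  fixes c y s k D :: real
  assumes cy: "c\<^sup>2 + y\<^sup>2 = 1" and s: "s > 0" and k: "k = 1/s - 1" and D: "D = c\<^sup>2 + y\<^sup>2 / s" and Dp: "D > 0"
  shows "1 + inverse (1 + (k * y * c / D)\<^sup>2) * ((k * (c\<^sup>2 - y\<^sup>2) * D - k * y * c * (2 * k * y * c)) / (D * D))
         = 1 / (s * (c\<^sup>2 + y\<^sup>2 / s\<^sup>2))"
proof -
  have b: "D\<^sup>2 + (k * y * c)\<^sup>2 = c\<^sup>2 + y\<^sup>2 / s\<^sup>2"
  proof -
    have "D\<^sup>2 + (k * y * c)\<^sup>2 = (c\<^sup>2 + y\<^sup>2 / s)\<^sup>2 + ((1/s - 1) * y * c)\<^sup>2" by (simp add: D k)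
    also have "\<dots> = c\<^sup>2 * (c\<^sup>2 + y\<^sup>2) + y\<^sup>2 / s\<^sup>2 * (c\<^sup>2 + y\<^sup>2)"
      using s by (simp add: field_simps power2_eq_square)
    finally show ?thesis using cy by simp
  qed
  have bp: "c\<^sup>2 + y\<^sup>2 / s\<^sup>2 > 0" using b Dp by (metis add_pos_nonneg zero_le_power2 zero_less_power2 less_irrefl)
  have "1 + (k * y * c / D)\<^sup>2 = (c\<^sup>2 + y\<^sup>2 / s\<^sup>2) / D\<^sup>2"
    using Dp b[symmetric] by (simp add: field_simps power2_eq_square)
  hence inv: "inverse (1 + (k * y * c / D)\<^sup>2) = D\<^sup>2 / (c\<^sup>2 + y\<^sup>2 / s\<^sup>2)" by simp
  have num: "k * (c\<^sup>2 - y\<^sup>2) * D - k * y * c * (2 * k * y * c) = 1/s - (c\<^sup>2 + y\<^sup>2 / s\<^sup>2)"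
  proof -
    have e: "s * s * s * s * s * (k * (c\<^sup>2 - y\<^sup>2) * D - k * y * c * (2 * k * y * c)) = s * s * s * s * s * (1/s - (c\<^sup>2 + y\<^sup>2 / s\<^sup>2))"
      unfolding k D using s cy by (simp add: field_simps power2_eq_square) algebra
    show ?thesis using e s by simp
  qed
  have fin: "1 + D\<^sup>2 / B * ((1/s - B) / (D * D)) = 1 / (s * B)" if "B > 0" for B
    using that Dp s by (simp add: field_simps power2_eq_square)
  show ?thesis unfolding inv num by (rule fin[OF bp])
qed

definition psi :: "real \<Rightarrow> real \<Rightarrow> real" where
  "psi s x = x + arctan ((1/s - 1) * sin x * cos x / ((cos x)\<^sup>2 + (sin x)\<^sup>2 / s))"

lemma D_pos: fixes s x :: real shows "s > 0 \<Longrightarrow> (cos x)\<^sup>2 + (sin x)\<^sup>2 / s > 0"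
proof -
  assume s: "s > 0"
  have "(cos x)\<^sup>2 > 0 \<or> (sin x)\<^sup>2 > 0"
  proof (rule ccontr)
    assume "\<not> ?thesis"
    hence "cos x = 0" "sin x = 0" by auto
    thus False using sin_cos_squared_add[of x] by simp
  qed
  thus ?thesis using s by (auto intro: add_pos_nonneg add_nonneg_pos)
qed

lemma psi_deriv:
  fixes s x :: real assumes s: "s > 0"
  shows "(psi s has_real_derivative 1 / (s * ((cos x)\<^sup>2 + (sin x)\<^sup>2 / s\<^sup>2))) (at x)"
proof -
  define D where "D = (cos x)\<^sup>2 + (sin x)\<^sup>2 / s"
  have Dp: "D > 0" using D_pos[OF s] by (simp add: D_def)
  have dN: "((\<lambda>x. (1/s - 1) * sin x * cos x) has_real_derivative (1/s - 1) * ((cos x)\<^sup>2 - (sin x)\<^sup>2)) (at x)"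
    by (rule derivative_eq_intros refl)+ (simp add: power2_eq_square algebra_simps)
  have dD: "((\<lambda>x. (cos x)\<^sup>2 + (sin x)\<^sup>2 / s) has_real_derivative 2 * (1/s - 1) * sin x * cos x) (at x)"
    by (rule derivative_eq_intros refl | (use s in simp; fail))+ (simp add: field_simps)
  have du: "((\<lambda>x. (1/s - 1) * sin x * cos x / ((cos x)\<^sup>2 + (sin x)\<^sup>2 / s)) has_real_derivative
      ((1/s - 1) * ((cos x)\<^sup>2 - (sin x)\<^sup>2) * D - (1/s - 1) * sin x * cos x * (2 * (1/s - 1) * sin x * cos x)) / (D * D)) (at x)"
    using DERIV_divide[OF dN dD] Dp by (simp add: D_def)
  have da: "((\<lambda>x. arctan ((1/s - 1) * sin x * cos x / ((cos x)\<^sup>2 + (sin x)\<^sup>2 / s))) has_real_derivative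
      inverse (1 + ((1/s - 1) * sin x * cos x / D)\<^sup>2) *
      (((1/s - 1) * ((cos x)\<^sup>2 - (sin x)\<^sup>2) * D - (1/s - 1) * sin x * cos x * (2 * (1/s - 1) * sin x * cos x)) / (D * D))) (at x)"
    using DERIV_chain2[OF DERIV_arctan du] by (simp add: D_def)
  have "(psi s has_real_derivative 1 + inverse (1 + ((1/s - 1) * sin x * cos x / D)\<^sup>2) *
      (((1/s - 1) * ((cos x)\<^sup>2 - (sin x)\<^sup>2) * D - (1/s - 1) * sin x * cos x * (2 * (1/s - 1) * sin x * cos x)) / (D * D))) (at x)"
    unfolding psi_def[abs_def] by (rule DERIV_add[OF DERIV_ident da])
  moreover have "1 + inverse (1 + ((1/s - 1) * sin x * cos x / D)\<^sup>2) *
      (((1/s - 1) * ((cos x)\<^sup>2 - (sin x)\<^sup>2) * D - (1/s - 1) * sin x * cos x * (2 * (1/s - 1) * sin x * cos x)) / (D * D))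
      = 1 / (s * ((cos x)\<^sup>2 + (sin x)\<^sup>2 / s\<^sup>2))"
    by (rule alg1[OF _ s refl D_def Dp]) simp
  ultimately show ?thesis by simp
qed

lemma bsum:
  fixes c y s :: real assumes cy: "c\<^sup>2 + y\<^sup>2 = 1" and s: "s > 0"
  shows "(c\<^sup>2 + y\<^sup>2 / s)\<^sup>2 + ((1/s - 1) * y * c)\<^sup>2 = c\<^sup>2 + y\<^sup>2 / s\<^sup>2"
proof -
  have "(c\<^sup>2 + y\<^sup>2 / s)\<^sup>2 + ((1/s - 1) * y * c)\<^sup>2 = c\<^sup>2 * (c\<^sup>2 + y\<^sup>2) + y\<^sup>2 / s\<^sup>2 * (c\<^sup>2 + y\<^sup>2)"
    using s by (simp add: field_simps power2_eq_square)
  thus ?thesis using cy by simp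
qed

lemma cD_yN:
  fixes c y s :: real assumes s: "s > 0"
  shows "c * (c\<^sup>2 + y\<^sup>2 / s) - y * ((1/s - 1) * y * c) = c * (c\<^sup>2 + y\<^sup>2)"
    and "y * (c\<^sup>2 + y\<^sup>2 / s) + c * ((1/s - 1) * y * c) = y * (c\<^sup>2 + y\<^sup>2) / s"
  using s by (simp_all add: field_simps power2_eq_square)

lemma psi_cos_sin:
  fixes s x :: real assumes s: "s > 0"
  defines "b \<equiv> (cos x)\<^sup>2 + (sin x)\<^sup>2 / s\<^sup>2"
  shows "cos (psi s x) = cos x / sqrt b" "sin (psi s x) = sin x / (s * sqrt b)" "b > 0"
proof -
  define D where "D = (cos x)\<^sup>2 + (sin x)\<^sup>2 / s"
  define N where "N = (1/s - 1) * sin x * cos x"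
  have Dp: "D > 0" using D_pos[OF s] by (simp add: D_def)
  have cy: "(cos x)\<^sup>2 + (sin x)\<^sup>2 = 1" by simp
  have bs: "D\<^sup>2 + N\<^sup>2 = b"
    unfolding D_def N_def b_def using bsum[OF cy s] by simp
  have bp: "b > 0" using bs Dp by (metis add_pos_nonneg zero_le_power2 zero_less_power2 less_irrefl)
  thus "b > 0" .
  have u: "1 + (N / D)\<^sup>2 = b / D\<^sup>2" using Dp bs by (simp add: field_simps)
  have sq: "sqrt (1 + (N / D)\<^sup>2) = sqrt b / D" unfolding u using Dp by (simp add: real_sqrt_divide)
  have sp: "sqrt (1 + (N / D)\<^sup>2) > 0" by (simp add: add_pos_nonneg)
  have pd: "psi s x = x + arctan (N / D)" by (simp add: psi_def N_def D_def)
  have "cos (psi s x) = (cos x - sin x * (N / D)) / sqrt (1 + (N / D)\<^sup>2)"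
    unfolding pd cos_add cos_arctan sin_arctan using Dp sp by (simp add: field_simps)
  also have "\<dots> = (cos x * D - sin x * N) / sqrt b" unfolding sq using Dp bp by (simp add: field_simps)
  also have "cos x * D - sin x * N = cos x * ((cos x)\<^sup>2 + (sin x)\<^sup>2)"
    unfolding D_def N_def by (rule cD_yN(1)[OF s])
  finally show "cos (psi s x) = cos x / sqrt b" by simp
  have "sin (psi s x) = (sin x + cos x * (N / D)) / sqrt (1 + (N / D)\<^sup>2)"
    unfolding pd sin_add cos_arctan sin_arctan using Dp sp by (simp add: field_simps)
  also have "\<dots> = (sin x * D + cos x * N) / sqrt b" unfolding sq using Dp bp by (simp add: field_simps)
  also have "sin x * D + cos x * N = sin x * ((cos x)\<^sup>2 + (sin x)\<^sup>2) / s"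
    unfolding D_def N_def by (rule cD_yN(2)[OF s])
  finally show "sin (psi s x) = sin x / (s * sqrt b)" by simp
qed



lemma sin_sq_le1: "(sin t)\<^sup>2 \<le> (1::real)"
  using sin_squared_eq[of t] by (simp add: add_le_same_cancel1)

lemma q_pos: fixes lam t :: real assumes lam: "lam > 0" shows "1 + (lam - 1) * (sin t)\<^sup>2 > 0"
proof (cases "lam \<ge> 1")
  case True thus ?thesis by (simp add: add_pos_nonneg)
next
  case False
  have "(1 - lam) * (sin t)\<^sup>2 \<le> (1 - lam)" using False sin_sq_le1[of t] by (simp add: mult_left_le)
  thus ?thesis using lam by (simp add: algebra_simps)
qed

lemma S_gt: fixes \<gamma> :: real assumes "\<gamma> \<ge> 0" shows "sqrt (\<gamma>\<^sup>2 + 1) > \<gamma>"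
proof -
  have "sqrt (\<gamma>\<^sup>2) < sqrt (\<gamma>\<^sup>2 + 1)" by (rule real_sqrt_less_mono) simp
  thus ?thesis using assms by simp
qed

lemma cos_q_le: fixes lam t :: real assumes lam: "lam > 0"
  shows "cos t / sqrt (1 + (lam - 1) * (sin t)\<^sup>2) \<le> 1"
proof -
  have q: "1 + (lam - 1) * (sin t)\<^sup>2 = (cos t)\<^sup>2 + lam * (sin t)\<^sup>2"
    using sin_squared_eq[of t] by (simp add: algebra_simps)
  have "(cos t)\<^sup>2 \<le> 1 + (lam - 1) * (sin t)\<^sup>2" unfolding q using lam by simp
  hence "sqrt ((cos t)\<^sup>2) \<le> sqrt (1 + (lam - 1) * (sin t)\<^sup>2)" by (rule real_sqrt_le_mono)
  hence "cos t \<le> sqrt (1 + (lam - 1) * (sin t)\<^sup>2)" by simp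
  moreover have "sqrt (1 + (lam - 1) * (sin t)\<^sup>2) > 0" using q_pos[OF lam] by simp
  ultimately show ?thesis by simp
qed

lemma P2_pos: fixes lam \<gamma> t :: real assumes lam: "lam > 0" and g: "\<gamma> \<ge> 0"
  shows "sqrt (\<gamma>\<^sup>2 + 1) - \<gamma> * (cos t / sqrt (1 + (lam - 1) * (sin t)\<^sup>2)) > 0"
proof -
  have "\<gamma> * (cos t / sqrt (1 + (lam - 1) * (sin t)\<^sup>2)) \<le> \<gamma>"
    using mult_left_mono[OF cos_q_le[OF lam, of t] g] by simp
  thus ?thesis using S_gt[OF g] by simp
qed

lemma P1_pos: fixes \<gamma> t :: real assumes g: "\<gamma> \<ge> 0"
  shows "sqrt (\<gamma>\<^sup>2 + 1) - \<gamma> * cos t > 0"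
proof -
  have "\<gamma> * cos t \<le> \<gamma>" using g by (simp add: mult_left_le)
  thus ?thesis using S_gt[OF g] by simp
qed

lemma fWC_eq: fixes \<gamma> t :: real assumes g: "\<gamma> \<ge> 0"
  shows "f_WC (delta_of \<gamma>) t = 1 / (2 * pi * (sqrt (\<gamma>\<^sup>2 + 1) - \<gamma> * cos t))"
proof -
  define d where "d = delta_of \<gamma>"
  note df = delta_facts[OF g, folded d_def]
  have d2: "1 - d\<^sup>2 > 0" using power_strict_mono[of d 1 2] df(1,2) by simp
  have "(sqrt (\<gamma>\<^sup>2 + 1) - \<gamma> * cos t) * (1 - d\<^sup>2) = sqrt (\<gamma>\<^sup>2 + 1) * (1 - d\<^sup>2) - (\<gamma> * (1 - d\<^sup>2)) * cos t"
    by (simp add: algebra_simps)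
  also have "\<dots> = 1 + d\<^sup>2 - 2 * d * cos t" using df(3,4) by simp
  finally have e: "1 + d\<^sup>2 - 2 * d * cos t = (sqrt (\<gamma>\<^sup>2 + 1) - \<gamma> * cos t) * (1 - d\<^sup>2)" ..
  show ?thesis unfolding d_def[symmetric] f_WC_def e using d2 by simp
qed


definition Hf :: "real \<Rightarrow> real \<Rightarrow> real \<Rightarrow> real" where
  "Hf lam \<gamma> t = f_WC (delta_of \<gamma>) t * (- ln lam / 2)
     + f_WC (delta_of \<gamma>) t * ln (1 + (lam - 1) * (sin t)\<^sup>2)
     - f_WC (delta_of \<gamma>) t * ln (sqrt (\<gamma>\<^sup>2 + 1) - \<gamma> * cos t)
     + f_WC (delta_of \<gamma>) t * ln (sqrt (\<gamma>\<^sup>2 + 1) - \<gamma> * cos t / sqrt (1 + (lam - 1) * (sin t)\<^sup>2))"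

lemma q_alg:
  fixes c y s lam B b :: real
  assumes cy: "c\<^sup>2 + y\<^sup>2 = 1" and lam: "lam > 0" and ls: "s\<^sup>2 = lam" and b: "b = c\<^sup>2 + y\<^sup>2 / lam"
    and BB: "B\<^sup>2 = b" and bp: "b > 0"
  shows "1 + (lam - 1) * (y / (s * B))\<^sup>2 = 1 / b"
proof -
  have "(y / (s * B))\<^sup>2 = y\<^sup>2 / (s\<^sup>2 * B\<^sup>2)" by (simp add: power_divide power_mult_distrib)
  also have "\<dots> = y\<^sup>2 / (lam * b)" by (simp only: ls BB)
  finally have "(y / (s * B))\<^sup>2 = y\<^sup>2 / (lam * b)" .
  hence "1 + (lam - 1) * (y / (s * B))\<^sup>2 = 1 + (lam - 1) * (y\<^sup>2 / (lam * b))" by (simp only:)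
  also have "\<dots> = (lam * b + (lam - 1) * y\<^sup>2) / (lam * b)"
    using lam bp by (simp add: field_simps)
  also have "lam * b + (lam - 1) * y\<^sup>2 = lam * (c\<^sup>2 + y\<^sup>2)" unfolding b using lam by (simp add: field_simps)
  finally show ?thesis using cy lam by simp
qed

lemma key_identity:
  fixes lam \<gamma> \<phi> :: real assumes lam: "lam > 0" and g: "\<gamma> \<ge> 0"
  shows "f_GCPC 0 \<gamma> lam \<phi> * ln (f_GCPC 0 \<gamma> lam \<phi> / f_CIPC 0 \<gamma> \<phi>)
       = (1 / (sqrt lam * ((cos \<phi>)\<^sup>2 + (sin \<phi>)\<^sup>2 / (sqrt lam)\<^sup>2))) * Hf lam \<gamma> (psi (sqrt lam) \<phi>)"
proof -
  define s where "s = sqrt lam"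
  have s0: "s > 0" and ls: "s\<^sup>2 = lam" using lam by (auto simp: s_def)
  define c where "c = cos \<phi>"
  define y where "y = sin \<phi>"
  have cy: "c\<^sup>2 + y\<^sup>2 = 1" by (simp add: c_def y_def)
  define b where "b = c\<^sup>2 + y\<^sup>2 / lam"
  define B where "B = sqrt b"
  define ps where "ps = psi s \<phi>"
  have pc: "cos ps = c / B" and psn: "sin ps = y / (s * B)" and bp: "b > 0"
    using psi_cos_sin[OF s0, of \<phi>] by (simp_all add: ps_def c_def y_def B_def b_def ls)
  have Bp: "B > 0" using bp by (simp add: B_def)
  have BB: "B\<^sup>2 = b" using bp by (simp add: B_def)
  have q: "1 + (lam - 1) * (sin ps)\<^sup>2 = 1 / b"
    unfolding psn by (rule q_alg[OF cy lam ls b_def BB bp])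
  have sq: "sqrt (1 + (lam - 1) * (sin ps)\<^sup>2) = 1 / B" unfolding q B_def by (simp add: real_sqrt_divide)
  have t4: "sqrt (\<gamma>\<^sup>2 + 1) - \<gamma> * cos ps / sqrt (1 + (lam - 1) * (sin ps)\<^sup>2) = sqrt (\<gamma>\<^sup>2 + 1) - \<gamma> * c"
    unfolding sq pc using Bp by simp
  have P1: "sqrt (\<gamma>\<^sup>2 + 1) - \<gamma> * c > 0" using P1_pos[OF g, of \<phi>] by (simp add: c_def)
  define P2 where "P2 = sqrt (\<gamma>\<^sup>2 + 1) - \<gamma> * cos ps"
  have P2p: "P2 > 0" using P1_pos[OF g, of ps] by (simp add: P2_def)
  have fW: "f_WC (delta_of \<gamma>) ps = 1 / (2 * pi * P2)" using fWC_eq[OF g] by (simp add: P2_def)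
  have fG0: "f_GCPC 0 \<gamma> lam \<phi> = 1 / (2 * pi * s * (b * sqrt (\<gamma>\<^sup>2 + 1) - \<gamma> * c * B))"
    by (simp add: f_GCPC_def Let_def s_def b_def B_def c_def y_def)
  have dd: "b * sqrt (\<gamma>\<^sup>2 + 1) - \<gamma> * c * B = b * P2"
  proof -
    have "b * P2 = b * sqrt (\<gamma>\<^sup>2 + 1) - \<gamma> * c * (b / B)" unfolding P2_def pc by (simp add: algebra_simps)
    also have "b / B = B" using BB Bp by (simp add: field_simps power2_eq_square)
    finally show ?thesis by simp
  qed
  have fG: "f_GCPC 0 \<gamma> lam \<phi> = 1 / (2 * pi * s * b * P2)" unfolding fG0 dd by (simp add: mult.assoc)
  have fC: "f_CIPC 0 \<gamma> \<phi> = 1 / (2 * pi * (sqrt (\<gamma>\<^sup>2 + 1) - \<gamma> * c))" by (simp add: f_CIPC_def c_def)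
  have rat: "f_GCPC 0 \<gamma> lam \<phi> / f_CIPC 0 \<gamma> \<phi> = (sqrt (\<gamma>\<^sup>2 + 1) - \<gamma> * c) / (s * (b * P2))"
    unfolding fG fC using P1 P2p bp s0 by (simp add: field_simps)
  have L: "ln (f_GCPC 0 \<gamma> lam \<phi> / f_CIPC 0 \<gamma> \<phi>) = ln (sqrt (\<gamma>\<^sup>2 + 1) - \<gamma> * c) - ln lam / 2 - ln b - ln P2"
  proof -
    have "ln ((sqrt (\<gamma>\<^sup>2 + 1) - \<gamma> * c) / (s * (b * P2))) = ln (sqrt (\<gamma>\<^sup>2 + 1) - \<gamma> * c) - (ln s + (ln b + ln P2))"
      using P1 P2p bp s0 by (simp add: ln_div ln_mult)
    moreover have "ln s = ln lam / 2" unfolding s_def using lam by (simp add: ln_sqrt)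
    ultimately show ?thesis unfolding rat by simp
  qed
  have H: "Hf lam \<gamma> ps = 1 / (2 * pi * P2) * (- ln lam / 2 - ln b - ln P2 + ln (sqrt (\<gamma>\<^sup>2 + 1) - \<gamma> * c))"
  proof -
    have h1: "Hf lam \<gamma> ps = f_WC (delta_of \<gamma>) ps * (- ln lam / 2) + f_WC (delta_of \<gamma>) ps * ln (1 / b)
        - f_WC (delta_of \<gamma>) ps * ln P2 + f_WC (delta_of \<gamma>) ps * ln (sqrt (\<gamma>\<^sup>2 + 1) - \<gamma> * c)"
      unfolding Hf_def unfolding t4 unfolding q P2_def ..
    have h2: "ln (1 / b) = - ln b" using bp by (simp add: ln_div)
    show ?thesis unfolding h1 h2 fW using P2p by (simp add: field_simps)
  qed
  have "(1 / (sqrt lam * ((cos \<phi>)\<^sup>2 + (sin \<phi>)\<^sup>2 / (sqrt lam)\<^sup>2))) = 1 / (s * b)"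
    by (simp add: s_def[symmetric] ls b_def c_def y_def)
  hence "(1 / (sqrt lam * ((cos \<phi>)\<^sup>2 + (sin \<phi>)\<^sup>2 / (sqrt lam)\<^sup>2))) * Hf lam \<gamma> (psi (sqrt lam) \<phi>)
      = 1 / (s * b) * (1 / (2 * pi * P2) * (- ln lam / 2 - ln b - ln P2 + ln (sqrt (\<gamma>\<^sup>2 + 1) - \<gamma> * c)))"
    using H by (simp add: ps_def s_def)
  also have "\<dots> = f_GCPC 0 \<gamma> lam \<phi> * ln (f_GCPC 0 \<gamma> lam \<phi> / f_CIPC 0 \<gamma> \<phi>)"
    unfolding L unfolding fG using P2p bp s0 by (simp add: field_simps)
  finally show ?thesis ..
qed




theorem mainTheorem6:
  fixes lam \<gamma> \<omega> :: real
  assumes "lam > 0" and "\<gamma> \<ge> 0" and "-pi \<le> \<omega>" and "\<omega> \<le> pi"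
  defines "\<delta> \<equiv> delta_of \<gamma>"
  shows "((\<lambda>\<theta>. f_GCPC \<omega> \<gamma> lam \<theta> * ln (f_GCPC \<omega> \<gamma> lam \<theta> / f_CIPC \<omega> \<gamma> \<theta>))
           has_integral
           (- ln lam / 2
            + 2 * ln ((sqrt lam * (1 - \<delta>\<^sup>2) + 1 + \<delta>\<^sup>2) / 2)
            - ln (1 - \<delta>\<^sup>2)
            + integral {-pi<..pi} (\<lambda>\<psi>. f_WC \<delta> \<psi> *
                 ln (sqrt (\<gamma>\<^sup>2 + 1) - \<gamma> * cos \<psi> / sqrt (1 + (lam - 1) * (sin \<psi>)\<^sup>2)))))
         {-pi..pi}"
proof -
  have lam: "lam > 0" and g: "\<gamma> \<ge> 0" using assms(1,2) .
  have dd: "\<delta> = delta_of \<gamma>" using assms(5) by simp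
  note df = delta_facts[OF g, folded dd]
  define s where "s = sqrt lam"
  have s0: "s > 0" using lam by (simp add: s_def)
  define K where "K = (\<lambda>\<phi>. f_GCPC 0 \<gamma> lam \<phi> * ln (f_GCPC 0 \<gamma> lam \<phi> / f_CIPC 0 \<gamma> \<phi>))"
  define bb where "bb = (\<lambda>\<phi>::real. (cos \<phi>)\<^sup>2 + (sin \<phi>)\<^sup>2 / s\<^sup>2)"
  have key: "K \<phi> = (1 / (s * bb \<phi>)) * Hf lam \<gamma> (psi s \<phi>)" for \<phi>
    using key_identity[OF lam g, of \<phi>] by (simp add: K_def bb_def s_def)
  have bbp: "bb \<phi> > 0" for \<phi> using D_pos[of "s\<^sup>2" \<phi>] s0 by (simp add: bb_def)
  define E3 where "E3 = (\<lambda>\<psi>. f_WC \<delta> \<psi> * ln (sqrt (\<gamma>\<^sup>2 + 1) - \<gamma> * cos \<psi> / sqrt (1 + (lam - 1) * (sin \<psi>)\<^sup>2)))"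
  have cWC: "continuous_on UNIV (f_WC \<delta>)" by (rule cont_f_WC[OF df(1,2)])
  have contE3: "continuous_on UNIV E3"
    unfolding E3_def
    using cWC q_pos[OF lam] P2_pos[OF lam g]
    by (intro continuous_intros) (auto simp: less_imp_neq dest: sym)
  have contHf: "continuous_on UNIV (Hf lam \<gamma>)"
    unfolding Hf_def dd[symmetric]
    using cWC q_pos[OF lam] P2_pos[OF lam g] P1_pos[OF g]
    by (intro continuous_intros) (auto simp: less_imp_neq dest: sym)
  have psi_cont: "continuous_on UNIV (psi s)"
    by (rule continuous_at_imp_continuous_on) (metis DERIV_isCont psi_deriv[OF s0])
  have Kfun: "K = (\<lambda>\<phi>. (1 / (s * bb \<phi>)) * Hf lam \<gamma> (psi s \<phi>))" using key by (simp add: fun_eq_iff)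
  have contbb: "continuous_on UNIV bb" unfolding bb_def by (intro continuous_intros) (use s0 in simp)
  have contK: "continuous_on UNIV K"
  proof -
    have "continuous_on UNIV (\<lambda>\<phi>. Hf lam \<gamma> (psi s \<phi>))"
      by (rule continuous_on_compose2[OF contHf psi_cont]) auto
    thus ?thesis unfolding Kfun using contbb bbp s0
      by (intro continuous_intros) (auto simp: less_imp_neq dest: sym)
  qed
  have perK: "K (x + 2 * pi) = K x" for x
    by (simp add: K_def f_GCPC_def f_CIPC_def Let_def)
  have orig: "(\<lambda>\<theta>. f_GCPC \<omega> \<gamma> lam \<theta> * ln (f_GCPC \<omega> \<gamma> lam \<theta> / f_CIPC \<omega> \<gamma> \<theta>)) = (\<lambda>\<theta>. 1 *\<^sub>R K (\<theta> - \<omega>))"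
    by (simp add: fun_eq_iff K_def f_GCPC_def f_CIPC_def Let_def)
  have stepB: "((\<lambda>\<theta>. 1 *\<^sub>R K (\<theta> - \<omega>)) has_integral integral {-pi - \<omega> .. pi - \<omega>} K) {-pi..pi}"
  proof -
    have "((\<lambda>\<theta>. 1 *\<^sub>R K (\<theta> - \<omega>)) has_integral integral {(\<lambda>\<theta>. \<theta> - \<omega>) (-pi) .. (\<lambda>\<theta>. \<theta> - \<omega>) pi} K) {-pi..pi}"
      apply (rule has_integral_substitution[where c="-2*pi" and d="2*pi"])
      using assms(3,4) apply (auto intro!: derivative_eq_intros continuous_on_subset[OF contK])
      done
    thus ?thesis by simp
  qed
  have stepC: "integral {-pi - \<omega> .. pi - \<omega>} K = integral {0..2*pi} K"
  proof -
    have "(K has_integral integral {0..2*pi} K) {-pi - \<omega> .. (-pi - \<omega>) + 2*pi}"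
      by (rule periodic_shift[OF contK perK]) (use assms(3,4) in auto)
    moreover have "(-pi - \<omega>) + 2*pi = pi - \<omega>" by simp
    ultimately show ?thesis by (metis integral_unique)
  qed
  have stepD: "integral {-pi..pi} K = integral {0..2*pi} K"
  proof -
    have "(K has_integral integral {0..2*pi} K) {-pi .. -pi + 2*pi}"
      by (rule periodic_shift[OF contK perK]) auto
    thus ?thesis by (simp add: integral_unique)
  qed
  have psi_pi: "psi s pi = pi" "psi s (-pi) = -pi" by (simp_all add: psi_def)
  have stepE: "integral {-pi..pi} K = integral {-pi..pi} (Hf lam \<gamma>)"
  proof -
    have range: "psi s ` {-pi..pi} \<subseteq> {-2*pi..2*pi}"
    proof
      fix y assume "y \<in> psi s ` {-pi..pi}"
      then obtain x where x: "x \<in> {-pi..pi}" "y = psi s x" by auto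
      have "- (pi/2) < arctan ((1/s - 1) * sin x * cos x / ((cos x)\<^sup>2 + (sin x)\<^sup>2 / s))"
           "arctan ((1/s - 1) * sin x * cos x / ((cos x)\<^sup>2 + (sin x)\<^sup>2 / s)) < pi/2"
        by (rule arctan_lbound, rule arctan_ubound)
      thus "y \<in> {-2*pi..2*pi}" using x by (auto simp: psi_def)
    qed
    have "((\<lambda>\<phi>. (1 / (s * bb \<phi>)) *\<^sub>R Hf lam \<gamma> (psi s \<phi>)) has_integral integral {psi s (-pi) .. psi s pi} (Hf lam \<gamma>)) {-pi..pi}"
      apply (rule has_integral_substitution[where c="-2*pi" and d="2*pi"])
      using range apply (auto simp: psi_pi intro!: continuous_on_subset[OF contHf])
      using psi_deriv[OF s0] by (auto simp: bb_def intro: has_field_derivative_at_within)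
    hence "(K has_integral integral {-pi..pi} (Hf lam \<gamma>)) {-pi..pi}"
      by (simp add: psi_pi Kfun)
    thus ?thesis by (rule integral_unique)
  qed
  have i0: "((\<lambda>t. f_WC \<delta> t * (- ln lam / 2)) has_integral 1 * (- ln lam / 2)) {-pi..pi}"
    by (rule has_integral_mult_left[OF E0[OF df(1,2)]])
  have iB: "((\<lambda>t. f_WC \<delta> t * ln (1 + (lam - 1) * (sin t)\<^sup>2)) has_integral
          2 * ln ((sqrt lam * (1 - \<delta>\<^sup>2) + 1 + \<delta>\<^sup>2) / 2)) {-pi..pi}"
    by (rule EB[OF lam df(1,2)])
  have iA: "((\<lambda>t. f_WC \<delta> t * ln (sqrt (\<gamma>\<^sup>2 + 1) - \<gamma> * cos t)) has_integral ln (1 - \<delta>\<^sup>2)) {-pi..pi}"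
    using EA[OF g] by (simp add: dd)
  have i3: "(E3 has_integral integral {-pi..pi} E3) {-pi..pi}"
    by (rule integrable_integral, rule integrable_continuous_real, rule continuous_on_subset[OF contE3]) simp
  have Hfeq: "Hf lam \<gamma> = (\<lambda>t. f_WC \<delta> t * (- ln lam / 2) + f_WC \<delta> t * ln (1 + (lam - 1) * (sin t)\<^sup>2)
       - f_WC \<delta> t * ln (sqrt (\<gamma>\<^sup>2 + 1) - \<gamma> * cos t) + E3 t)"
    by (simp add: fun_eq_iff Hf_def dd E3_def)
  have iH: "(Hf lam \<gamma> has_integral (1 * (- ln lam / 2) + 2 * ln ((sqrt lam * (1 - \<delta>\<^sup>2) + 1 + \<delta>\<^sup>2) / 2)
       - ln (1 - \<delta>\<^sup>2) + integral {-pi..pi} E3)) {-pi..pi}"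
    unfolding Hfeq by (intro has_integral_add has_integral_diff i0 iB iA i3)
  have stepG: "integral {-pi<..pi} E3 = integral {-pi..pi} E3"
  proof -
    have "(E3 has_integral integral {-pi..pi} E3) {-pi<..pi}"
    proof (rule has_integral_spike_set_eq[THEN iffD1, OF _ _ i3])
      show "negligible {x \<in> {-pi..pi} - {-pi<..pi}. E3 x \<noteq> 0}"
        by (rule negligible_subset[of "{-pi}"]) auto
      show "negligible {x \<in> {-pi<..pi} - {-pi..pi}. E3 x \<noteq> 0}"
        by (rule negligible_subset[of "{}"]) auto
    qed
    thus ?thesis by (rule integral_unique)
  qed
  have "((\<lambda>\<theta>. f_GCPC \<omega> \<gamma> lam \<theta> * ln (f_GCPC \<omega> \<gamma> lam \<theta> / f_CIPC \<omega> \<gamma> \<theta>)) has_integral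
         integral {-pi..pi} (Hf lam \<gamma>)) {-pi..pi}"
    using stepB unfolding orig stepC stepD[symmetric] stepE .
  moreover have "integral {-pi..pi} (Hf lam \<gamma>) = - ln lam / 2
            + 2 * ln ((sqrt lam * (1 - \<delta>\<^sup>2) + 1 + \<delta>\<^sup>2) / 2)
            - ln (1 - \<delta>\<^sup>2) + integral {-pi<..pi} E3"
    using integral_unique[OF iH] stepG by simp
  ultimately show ?thesis unfolding E3_def by simp
qed


end
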